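(* Let $C_1,C_2,\alpha,\beta>0$ be constants and $d\ge1$, and let $k(t)$ solve the ODE $$k'(t)=C_1k(1-k^{\alpha})+C_2k^{d+1}e^{-\beta t}.$$ Then there exists $\delta>0$ such that if $0<k(0)<\delta$, then $k(t)\to1$ exponentially as $t\to\infty$, i.e. $|k(t)-1|\le Ce^{-\epsilon t}$ for some constants $C,\epsilon>0$.
   Context: In the paper $d\ge3$ denotes the spatial dimension. *)

theory Defs
  imports "HOL-Analysis.Analysis"
begin

end

theory Submission
  imports Defs
begin


lemma at_pos: "(t::real) > 0 \<Longrightarrow> at t within {0..} = at t"
  by (rule at_within_interior) (simp add: interior_Ici[of "-1"])

lemma mono_tool:
  fixes f f' :: "real \<Rightarrow> real"
  assumes D: "\<forall>t\<ge>0. (f has_real_derivative f' t) (at t within {0..})"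
    and "0 \<le> a" "a \<le> b" and P: "\<And>t. a < t \<Longrightarrow> t < b \<Longrightarrow> f' t \<ge> 0"
  shows "f a \<le> f b"
proof (rule DERIV_nonneg_imp_increasing_open[OF \<open>a \<le> b\<close>])
  fix x assume x: "a < x" "x < b"
  have "x > 0" using x \<open>0 \<le> a\<close> by linarith
  then show "\<exists>y. DERIV f x :> y \<and> y \<ge> 0"
    using D P[OF x] at_pos[of x] by (metis less_imp_le)
next
  show "continuous_on {a..b} f"
    apply (rule DERIV_continuous_on[where D=f'])
    apply (rule DERIV_subset[where s="{0..}"])
    using D assms by auto
qed

lemma anti_tool:
  fixes f f' :: "real \<Rightarrow> real"
  assumes D: "\<forall>t\<ge>0. (f has_real_derivative f' t) (at t within {0..})"
    and "0 \<le> a" "a \<le> b" and P: "\<And>t. a < t \<Longrightarrow> t < b \<Longrightarrow> f' t \<le> 0"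
  shows "f b \<le> f a"
proof -
  have "(\<lambda>t. - f t) a \<le> (\<lambda>t. - f t) b"
    apply (rule mono_tool[of "\<lambda>t. - f t" "\<lambda>t. - f' t" a b])
    using D assms by (auto intro: derivative_intros)
  then show ?thesis by simp
qed

lemma pow_lip:
  fixes x \<alpha> :: real
  assumes "0 < x" "x < 2" "\<alpha> > 0"
  shows "\<alpha> * 2 powr (-\<alpha>-1) * \<bar>x - 1\<bar> \<le> \<bar>x powr (-\<alpha>) - 1\<bar>"
proof -
  have der: "\<And>y. 0 < y \<Longrightarrow> DERIV (\<lambda>y. y powr (-\<alpha>)) y :> (-\<alpha>) * y powr (-\<alpha> - 1)"
    by (rule has_real_derivative_powr)
  have bnd: "\<And>y. 0 < y \<Longrightarrow> y < 2 \<Longrightarrow> 2 powr (-\<alpha>-1) \<le> y powr (-\<alpha>-1)"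
    by (rule powr_mono2') (use assms in auto)
  consider "x < 1" | "x = 1" | "x > 1" by linarith
  then show ?thesis
  proof cases
    case 1
    obtain z where z: "x < z" "z < 1" "1 powr (-\<alpha>) - x powr (-\<alpha>) = (1 - x) * ((-\<alpha>) * z powr (-\<alpha> - 1))"
      using MVT2[OF 1, of "\<lambda>y. y powr (-\<alpha>)" "\<lambda>y. (-\<alpha>) * y powr (-\<alpha> - 1)"] der assms by force
    have "2 powr (-\<alpha>-1) \<le> z powr (-\<alpha>-1)" using bnd z assms by auto
    hence "\<alpha> * 2 powr (-\<alpha>-1) * (1 - x) \<le> \<alpha> * z powr (-\<alpha>-1) * (1 - x)"
      using 1 assms by (intro mult_right_mono mult_left_mono) auto
    also have "\<dots> = x powr (-\<alpha>) - 1" using z(3) by (simp add: algebra_simps)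
    finally show ?thesis using 1 by auto
  next
    case 2 then show ?thesis by simp
  next
    case 3
    obtain z where z: "1 < z" "z < x" "x powr (-\<alpha>) - 1 powr (-\<alpha>) = (x - 1) * ((-\<alpha>) * z powr (-\<alpha> - 1))"
      using MVT2[OF 3, of "\<lambda>y. y powr (-\<alpha>)" "\<lambda>y. (-\<alpha>) * y powr (-\<alpha> - 1)"] der assms by force
    have "2 powr (-\<alpha>-1) \<le> z powr (-\<alpha>-1)" using bnd z assms by auto
    hence "\<alpha> * 2 powr (-\<alpha>-1) * (x - 1) \<le> \<alpha> * z powr (-\<alpha>-1) * (x - 1)"
      using 3 assms by (intro mult_right_mono mult_left_mono) auto
    also have "\<dots> = 1 - x powr (-\<alpha>)" using z(3) by (simp add: algebra_simps)
    finally show ?thesis using 3 by auto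
  qed
qed

lemma powr_alg:
  fixes x \<alpha> :: real and d :: nat
  assumes "x > 0"
  shows "x powr (-\<alpha>-1) * x = x powr (-\<alpha>)"
    and "x powr (-\<alpha>-1) * x * x powr \<alpha> = 1"
    and "x powr (-\<alpha>-1) * x ^ (d+1) = x ^ d * x powr (-\<alpha>)"
proof -
  show 1: "x powr (-\<alpha>-1) * x = x powr (-\<alpha>)"
    using assms by (simp add: powr_add[symmetric] powr_diff)
  show "x powr (-\<alpha>-1) * x * x powr \<alpha> = 1"
    using assms by (simp add: 1 powr_add[symmetric])
  show "x powr (-\<alpha>-1) * x ^ (d+1) = x ^ d * x powr (-\<alpha>)"
    using assms 1 by (simp add: algebra_simps)
qed



theorem lemma5p12:
  fixes C1 C2 \<alpha> \<beta> :: real and d :: nat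
  assumes "C1 > 0" "C2 > 0" "\<alpha> > 0" "\<beta> > 0" "d \<ge> 1"
  shows "\<exists>\<delta>>0. \<forall>k :: real \<Rightarrow> real.
           (\<forall>t\<ge>0. (k has_real_derivative
               (C1 * k t * (1 - k t powr \<alpha>) + C2 * k t ^ (d + 1) * exp (- \<beta> * t)))
               (at t within {0..}))
           \<and> 0 < k 0 \<and> k 0 < \<delta>
           \<longrightarrow> (\<exists>C>0. \<exists>\<epsilon>>0. \<forall>t\<ge>0. \<bar>k t - 1\<bar> \<le> C * exp (- \<epsilon> * t))"
proof -
  note C1 = \<open>C1 > 0\<close> and C2 = \<open>C2 > 0\<close> and al = \<open>\<alpha> > 0\<close> and be = \<open>\<beta> > 0\<close>
  define L where "L = C1 + C1 * 2 powr \<alpha> + C2 * 2 ^ d"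
  have p2: "2 powr \<alpha> > 1" using al by (simp add: powr_less_mono[of 0 \<alpha> 2, simplified])
  define Q where "Q = 2 * C2 * 2 ^ d / (C1 * (2 powr \<alpha> - 1))"
  have Qp: "Q > 0" unfolding Q_def using C1 C2 p2 by auto
  define T where "T = Q / \<beta>"
  have Tp: "T > 0" unfolding T_def using Qp be by auto
  have Lp: "L > 0" unfolding L_def using C1 C2 by (simp add: add_pos_nonneg)
  define \<delta> where "\<delta> = min 1 (exp (- L * T))"
  have dp: "\<delta> > 0" unfolding \<delta>_def by simp
  show ?thesis
  proof (rule exI[of _ \<delta>], intro conjI allI impI dp)
    fix k :: "real \<Rightarrow> real"
    assume H: "(\<forall>t\<ge>0. (k has_real_derivative
               (C1 * k t * (1 - k t powr \<alpha>) + C2 * k t ^ (d + 1) * exp (- \<beta> * t)))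
               (at t within {0..}))
           \<and> 0 < k 0 \<and> k 0 < \<delta>"
    define D where "D t = C1 * k t * (1 - k t powr \<alpha>) + C2 * k t ^ (d + 1) * exp (- \<beta> * t)" for t
    have Dk: "\<forall>t\<ge>0. (k has_real_derivative D t) (at t within {0..})"
      using H unfolding D_def by blast
    have k0: "0 < k 0" "k 0 < \<delta>" using H by auto
    have cont: "continuous_on {0..} k"
      by (rule DERIV_continuous_on[where D=D]) (use Dk in auto)
    have bounds: "\<forall>t\<ge>0. 0 < k t \<and> k t < 2"
    proof (rule ccontr)
      assume nb: "\<not> ?thesis"
      define S where "S = {0..} \<inter> k -` ({..0} \<union> {2..})"
      have Sne: "S \<noteq> {}" using nb unfolding S_def by (auto simp: not_less)
      have Sbdd: "bdd_below S" unfolding S_def by (rule bdd_belowI[of _ 0]) auto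
      have Scl: "closed S" unfolding S_def
        by (rule continuous_closed_preimage[OF cont]) auto
      define t1 where "t1 = Inf S"
      have t1S: "t1 \<in> S" unfolding t1_def by (rule closed_contains_Inf[OF Sne Sbdd Scl])
      have t1nn: "t1 \<ge> 0" using t1S unfolding S_def by auto
      have before: "0 < k t \<and> k t < 2" if "0 \<le> t" "t < t1" for t
      proof (rule ccontr)
        assume "\<not> (0 < k t \<and> k t < 2)"
        hence "t \<in> S" using that unfolding S_def by auto
        hence "t1 \<le> t" unfolding t1_def by (rule cInf_lower[OF _ Sbdd])
        thus False using that by auto
      qed
      have "k 0 < 2" using k0 unfolding \<delta>_def by auto
      hence "0 \<notin> S" using k0 unfolding S_def by auto
      hence t1p: "t1 > 0" using t1S t1nn by (cases "t1 = 0") auto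
      have up: "k t1 * exp (- L * t1) \<le> k 0 * exp (- L * 0)"
      proof (rule anti_tool[of "\<lambda>t. k t * exp (- L * t)" "\<lambda>t. D t * exp (- L * t) + k t * (exp (- L * t) * (- L))" 0 t1])
        show "\<forall>t\<ge>0. ((\<lambda>t. k t * exp (- L * t)) has_real_derivative D t * exp (- L * t) + k t * (exp (- L * t) * (- L))) (at t within {0..})"
          using Dk by (auto intro!: derivative_eq_intros)
        fix t assume t: "0 < t" "t < t1"
        have kt: "0 < k t" "k t < 2" using before[of t] t by auto
        have "k t powr \<alpha> \<ge> 0" by simp
        have kd: "k t ^ d \<le> 2 ^ d" using kt by (intro power_mono) auto
        have "D t = k t * (C1 * (1 - k t powr \<alpha>) + C2 * k t ^ d * exp (- \<beta> * t))"
          unfolding D_def by (simp add: algebra_simps)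
        also have "\<dots> \<le> k t * L"
        proof (rule mult_left_mono)
          have "exp (- \<beta> * t) \<le> 1" using be t by simp
          moreover have "C2 * k t ^ d \<le> C2 * 2 ^ d" using kd C2 by simp
          ultimately have "C2 * k t ^ d * exp (- \<beta> * t) \<le> (C2 * 2 ^ d) * 1"
            using C2 kt by (intro mult_mono) auto
          hence "C2 * k t ^ d * exp (- \<beta> * t) \<le> C2 * 2 ^ d" by simp
          moreover have "C1 * (1 - k t powr \<alpha>) \<le> C1 + C1 * 2 powr \<alpha>" using C1 by (simp add: algebra_simps)
          ultimately show "C1 * (1 - k t powr \<alpha>) + C2 * k t ^ d * exp (- \<beta> * t) \<le> L"
            unfolding L_def by linarith
        qed (use kt in auto)
        finally have "D t \<le> k t * L" .
        thus "D t * exp (- L * t) + k t * (exp (- L * t) * (- L)) \<le> 0"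
          by (simp add: algebra_simps mult_right_mono)
      qed (use t1nn in auto)
      have lo: "k 0 * exp (L * 0) \<le> k t1 * exp (L * t1)"
      proof (rule mono_tool[of "\<lambda>t. k t * exp (L * t)" "\<lambda>t. D t * exp (L * t) + k t * (exp (L * t) * L)" 0 t1])
        show "\<forall>t\<ge>0. ((\<lambda>t. k t * exp (L * t)) has_real_derivative D t * exp (L * t) + k t * (exp (L * t) * L)) (at t within {0..})"
          using Dk by (auto intro!: derivative_eq_intros)
        fix t assume t: "0 < t" "t < t1"
        have kt: "0 < k t" "k t < 2" using before[of t] t by auto
        have "k t powr \<alpha> \<le> 2 powr \<alpha>" using kt al by (intro powr_mono2) auto
        have "D t = k t * (C1 * (1 - k t powr \<alpha>) + C2 * k t ^ d * exp (- \<beta> * t))"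
          unfolding D_def by (simp add: algebra_simps)
        also have "\<dots> \<ge> k t * (- L)"
        proof (rule mult_left_mono)
          have f1: "C2 * k t ^ d * exp (- \<beta> * t) \<ge> 0" using C2 kt by simp
          have f2: "C1 * (1 - k t powr \<alpha>) \<ge> - C1 * 2 powr \<alpha>"
          proof -
            have "C1 * k t powr \<alpha> \<le> C1 * 2 powr \<alpha>"
              using C1 \<open>k t powr \<alpha> \<le> 2 powr \<alpha>\<close> by (simp add: mult_left_mono)
            moreover have "C1 * (1 - k t powr \<alpha>) = C1 - C1 * k t powr \<alpha>" by (simp add: right_diff_distrib)
            ultimately show ?thesis using C1 by linarith
          qed
          have "C1 + C2 * 2 ^ d \<ge> 0" using C1 C2 by simp
          thus "C1 * (1 - k t powr \<alpha>) + C2 * k t ^ d * exp (- \<beta> * t) \<ge> - L"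
            using f1 f2 unfolding L_def by linarith
        qed (use kt in auto)
        finally have "D t \<ge> - (k t * L)" by simp
        thus "D t * exp (L * t) + k t * (exp (L * t) * L) \<ge> 0"
        proof -
          have "D t * exp (L * t) + k t * (exp (L * t) * L) = exp (L * t) * (D t + k t * L)"
            by (simp add: algebra_simps)
          moreover have "D t + k t * L \<ge> 0" using \<open>D t \<ge> - (k t * L)\<close> by linarith
          ultimately show ?thesis by simp
        qed
      qed (use t1nn in auto)
      have kpos: "k t1 > 0"
      proof -
        have "k 0 * exp (L * 0) > 0" using k0 by simp
        with lo have "k t1 * exp (L * t1) > 0" by linarith
        thus ?thesis by (simp add: zero_less_mult_iff)
      qed
      have kge: "k t1 \<ge> 2" using t1S kpos unfolding S_def by auto
      have kle: "k t1 \<le> 2"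
      proof (rule ccontr)
        assume "\<not> k t1 \<le> 2"
        have "isCont k t1" using Dk t1p at_pos[of t1] by (metis DERIV_isCont less_imp_le)
        hence "(k \<longlongrightarrow> k t1) (at_left t1)"
          by (simp add: isCont_def filterlim_at_split)
        hence ev1: "eventually (\<lambda>x. k x > 2) (at_left t1)"
          using \<open>\<not> k t1 \<le> 2\<close> by (intro order_tendstoD(1)) auto
        have ev2: "eventually (\<lambda>x. x \<in> {0<..<t1}) (at_left t1)"
          by (rule eventually_at_left_real[OF t1p])
        have "eventually (\<lambda>x. False) (at_left t1)"
        proof (rule eventually_mono[OF eventually_conj[OF ev1 ev2]])
          fix x assume "2 < k x \<and> x \<in> {0<..<t1}"
          then show False using before[of x] by auto
        qed
        thus False by simp
      qed
      have k2: "k t1 = 2" using kge kle by simp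
      show False
      proof (cases "t1 \<le> T")
        case True
        have "k t1 = k t1 * exp (- L * t1) * exp (L * t1)" by (simp add: exp_minus field_simps)
        also have "\<dots> \<le> k 0 * exp (L * t1)" using up by simp
        also have "\<dots> \<le> k 0 * exp (L * T)" using True Lp k0 by simp
        also have "\<dots> < \<delta> * exp (L * T)" using k0 by simp
        also have "\<dots> \<le> exp (- L * T) * exp (L * T)" unfolding \<delta>_def by simp
        also have "\<dots> = 1" by (simp add: exp_minus)
        finally show False using k2 by simp
      next
        case False
        have "exp (\<beta> * t1) \<ge> exp (\<beta> * T)" using False be by simp
        moreover have "exp (\<beta> * T) \<ge> 1 + \<beta> * T" by (rule exp_ge_add_one_self)
        moreover have "\<beta> * T = Q" unfolding T_def using be by simp
        ultimately have eQ: "exp (\<beta> * t1) > Q" by linarith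
        have "exp (- \<beta> * t1) = 1 / exp (\<beta> * t1)" by (simp add: exp_minus field_simps)
        also have "\<dots> < 1 / Q" using eQ Qp by (simp add: frac_less2)
        finally have e1: "exp (- \<beta> * t1) < 1 / Q" .
        have "C2 * 2 ^ (d+1) * exp (- \<beta> * t1) < C2 * 2 ^ (d+1) * (1 / Q)"
          using e1 C2 by (intro mult_strict_left_mono) auto
        also have "\<dots> = C1 * (2 powr \<alpha> - 1)" unfolding Q_def using C1 C2 p2 by (simp add: field_simps)
        finally have lt: "C2 * 2 ^ (d+1) * exp (- \<beta> * t1) < C1 * (2 powr \<alpha> - 1)" .
        have "C1 * (2 powr \<alpha> - 1) > 0" using C1 p2 by simp
        hence Dneg: "D t1 < 0" using lt unfolding D_def k2 by (simp add: algebra_simps)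
        have "DERIV k t1 :> D t1" using Dk t1p at_pos[of t1] by (metis less_imp_le)
        then obtain e where e: "e > 0" "\<forall>h>0. h < e \<longrightarrow> k t1 < k (t1 - h)"
          using DERIV_neg_dec_left[OF _ Dneg] by blast
        define h where "h = min (e/2) (t1/2)"
        have "h > 0" "h < e" "h \<le> t1/2" unfolding h_def using e t1p by auto
        hence "k t1 < k (t1 - h)" using e by auto
        moreover have "k (t1 - h) < 2" using before[of "t1 - h"] \<open>h > 0\<close> \<open>h \<le> t1/2\<close> by auto
        ultimately show False using k2 by simp
      qed
    qed
    define z where "z t = k t powr (-\<alpha>) - 1" for t
    define a where "a = \<alpha> * C1"
    have ap: "a > 0" unfolding a_def using al C1 by simp
    define Dz where "Dz t = - a * z t - \<alpha> * C2 * k t ^ d * (z t + 1) * exp (- \<beta> * t)" for t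
    have zder: "\<forall>t\<ge>0. (z has_real_derivative Dz t) (at t within {0..})"
    proof (intro allI impI)
      fix t :: real assume t: "t \<ge> 0"
      have kt: "0 < k t" "k t < 2" using bounds t by auto
      have ch: "((\<lambda>x. k x powr (-\<alpha>)) has_real_derivative (-\<alpha> * k t powr (-\<alpha> - 1)) * D t) (at t within {0..})"
        using DERIV_chain'[OF Dk[rule_format, OF t] has_real_derivative_powr[OF kt(1), where r="-\<alpha>"]] by simp
      define x where "x = k t"
      define P where "P = x powr (-\<alpha>-1)"
      have e1: "P * x = x powr (-\<alpha>)" and e2: "P * x * x powr \<alpha> = 1"
        and e3: "P * x ^ (d+1) = x ^ d * x powr (-\<alpha>)"
        using powr_alg(1,2)[OF kt(1), of \<alpha>] powr_alg(3)[OF kt(1), of \<alpha> d] unfolding P_def x_def by auto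
      have "(-\<alpha> * k t powr (-\<alpha> - 1)) * D t
          = -\<alpha> * C1 * (P * x) + \<alpha> * C1 * (P * x * x powr \<alpha>) - \<alpha> * C2 * (P * x ^ (d+1)) * exp (- \<beta> * t)"
        unfolding D_def P_def x_def by (simp add: algebra_simps)
      also have "\<dots> = -\<alpha> * C1 * (x powr (-\<alpha>)) + \<alpha> * C1 * 1 - \<alpha> * C2 * (x ^ d * x powr (-\<alpha>)) * exp (- \<beta> * t)"
        by (subst e2, subst e3, subst e1, rule refl)
      also have "\<dots> = Dz t" unfolding Dz_def z_def a_def x_def by (simp add: algebra_simps)
      finally have eq: "(-\<alpha> * k t powr (-\<alpha> - 1)) * D t = Dz t" .
      show "(z has_real_derivative Dz t) (at t within {0..})"
        unfolding z_def using DERIV_diff[OF ch DERIV_const[of 1]] eq by simp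
    qed
    have zp1: "z t + 1 > 0" if "t \<ge> 0" for t using bounds that unfolding z_def by (simp add: less_imp_neq[symmetric])
    define z0 where "z0 = z 0"
    have zup: "z t \<le> z0 * exp (- a * t)" if t: "t \<ge> 0" for t
    proof -
      have "(\<lambda>t. z t * exp (a * t)) t \<le> (\<lambda>t. z t * exp (a * t)) 0"
      proof (rule anti_tool[of "\<lambda>t. z t * exp (a * t)" "\<lambda>t. Dz t * exp (a * t) + z t * (exp (a * t) * a)" 0 t])
        show "\<forall>t\<ge>0. ((\<lambda>t. z t * exp (a * t)) has_real_derivative Dz t * exp (a * t) + z t * (exp (a * t) * a)) (at t within {0..})"
          using zder by (auto intro!: derivative_eq_intros)
        fix s assume s: "0 < s" "s < t"
        have "Dz s * exp (a * s) + z s * (exp (a * s) * a) = - (exp (a * s) * (\<alpha> * C2 * k s ^ d * (z s + 1) * exp (- \<beta> * s)))"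
          unfolding Dz_def by (simp add: algebra_simps)
        moreover have "\<alpha> * C2 * k s ^ d * (z s + 1) * exp (- \<beta> * s) \<ge> 0"
        proof -
          have "k s > 0" using bounds s by auto
          thus ?thesis using al C2 zp1[of s] s by simp
        qed
        ultimately show "Dz s * exp (a * s) + z s * (exp (a * s) * a) \<le> 0" by simp
      qed (use t in auto)
      hence "z t * exp (a * t) \<le> z0" unfolding z0_def by simp
      hence "z t * exp (a * t) * exp (- a * t) \<le> z0 * exp (- a * t)" by (rule mult_right_mono) simp
      moreover have "z t * exp (a * t) * exp (- a * t) = z t" by (simp add: exp_minus)
      ultimately show ?thesis by linarith
    qed
    define G where "G = \<alpha> * C2 * 2 ^ d * (1 + \<bar>z0\<bar>)"
    have Gp: "G > 0" unfolding G_def using al C2 by (simp add: add_pos_nonneg)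
    define \<epsilon> where "\<epsilon> = min a \<beta> / 2"
    have ep: "\<epsilon> > 0" "\<epsilon> < a" "\<epsilon> < \<beta>" unfolding \<epsilon>_def using ap be by auto
    define A where "A = \<bar>z0\<bar> + G / (a - \<epsilon>)"
    have Ap: "A > 0" unfolding A_def using Gp ep by (simp add: add_nonneg_pos)
    have AG: "A * (a - \<epsilon>) \<ge> G"
    proof -
      have "A * (a - \<epsilon>) = \<bar>z0\<bar> * (a - \<epsilon>) + G" unfolding A_def using ep by (simp add: field_simps)
      moreover have "\<bar>z0\<bar> * (a - \<epsilon>) \<ge> 0" using ep by simp
      ultimately show ?thesis by linarith
    qed
    have gb: "\<alpha> * C2 * k t ^ d * (z t + 1) \<le> G" if t: "t \<ge> 0" for t
    proof -
      have kt: "0 < k t" "k t < 2" using bounds t by auto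
      have kd: "k t ^ d \<le> 2 ^ d" using kt by (intro power_mono) auto
      have "z0 * exp (- a * t) \<le> \<bar>z0\<bar> * exp (- a * t)" by (intro mult_right_mono) auto
      also have "\<dots> \<le> \<bar>z0\<bar> * 1" using ap t by (intro mult_left_mono) auto
      finally have "z t + 1 \<le> 1 + \<bar>z0\<bar>" using zup[OF t] by simp
      hence "k t ^ d * (z t + 1) \<le> 2 ^ d * (1 + \<bar>z0\<bar>)"
        using kd zp1[OF t] kt by (intro mult_mono) auto
      hence "(\<alpha> * C2) * (k t ^ d * (z t + 1)) \<le> (\<alpha> * C2) * (2 ^ d * (1 + \<bar>z0\<bar>))"
        using al C2 by (intro mult_left_mono) auto
      thus ?thesis unfolding G_def by (simp add: algebra_simps)
    qed
    have zlo: "z t + A * exp (- \<epsilon> * t) \<ge> 0" if t: "t \<ge> 0" for t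
    proof -
      have "(\<lambda>t. (z t + A * exp (- \<epsilon> * t)) * exp (a * t)) 0 \<le> (\<lambda>t. (z t + A * exp (- \<epsilon> * t)) * exp (a * t)) t"
      proof (rule mono_tool[of "\<lambda>t. (z t + A * exp (- \<epsilon> * t)) * exp (a * t)"
            "\<lambda>t. (Dz t + A * (exp (- \<epsilon> * t) * (- \<epsilon>))) * exp (a * t) + (z t + A * exp (- \<epsilon> * t)) * (exp (a * t) * a)" 0 t])
        show "\<forall>t\<ge>0. ((\<lambda>t. (z t + A * exp (- \<epsilon> * t)) * exp (a * t)) has_real_derivative (Dz t + A * (exp (- \<epsilon> * t) * (- \<epsilon>))) * exp (a * t) + (z t + A * exp (- \<epsilon> * t)) * (exp (a * t) * a)) (at t within {0..})"
          using zder by (auto intro!: derivative_eq_intros)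
        fix s assume s: "0 < s" "s < t"
        have "(Dz s + A * (exp (- \<epsilon> * s) * (- \<epsilon>))) * exp (a * s) + (z s + A * exp (- \<epsilon> * s)) * (exp (a * s) * a)
            = exp (a * s) * (A * (a - \<epsilon>) * exp (- \<epsilon> * s) - \<alpha> * C2 * k s ^ d * (z s + 1) * exp (- \<beta> * s))"
          unfolding Dz_def by (simp add: algebra_simps)
        moreover have "\<alpha> * C2 * k s ^ d * (z s + 1) * exp (- \<beta> * s) \<le> A * (a - \<epsilon>) * exp (- \<epsilon> * s)"
        proof -
          have "\<alpha> * C2 * k s ^ d * (z s + 1) * exp (- \<beta> * s) \<le> G * exp (- \<beta> * s)"
            using gb[of s] s by (intro mult_right_mono) auto
          also have "\<dots> \<le> G * exp (- \<epsilon> * s)" using Gp ep s by (intro mult_left_mono) auto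
          also have "\<dots> \<le> A * (a - \<epsilon>) * exp (- \<epsilon> * s)" using AG by (intro mult_right_mono) auto
          finally show ?thesis .
        qed
        ultimately show "(Dz s + A * (exp (- \<epsilon> * s) * (- \<epsilon>))) * exp (a * s) + (z s + A * exp (- \<epsilon> * s)) * (exp (a * s) * a) \<ge> 0"
          by simp
      qed (use t in auto)
      moreover have "z0 + A \<ge> 0"
      proof -
        have "G / (a - \<epsilon>) > 0" using Gp ep by simp
        thus ?thesis unfolding A_def by linarith
      qed
      ultimately have "(z t + A * exp (- \<epsilon> * t)) * exp (a * t) \<ge> 0" unfolding z0_def by simp
      thus ?thesis by (simp add: zero_le_mult_iff)
    qed
    have zabs: "\<bar>z t\<bar> \<le> A * exp (- \<epsilon> * t)" if t: "t \<ge> 0" for t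
    proof -
      have "z t \<le> \<bar>z0\<bar> * exp (- a * t)" using zup[OF t] by (smt (verit) exp_gt_zero mult_right_mono abs_ge_self)
      also have "\<dots> \<le> \<bar>z0\<bar> * exp (- \<epsilon> * t)" using ep t by (intro mult_left_mono) (auto intro!: mult_right_mono)
      also have "\<dots> \<le> A * exp (- \<epsilon> * t)" unfolding A_def using Gp ep by (intro mult_right_mono) auto
      finally show ?thesis using zlo[OF t] by linarith
    qed
    define c where "c = \<alpha> * 2 powr (-\<alpha>-1)"
    have cp: "c > 0" unfolding c_def using al by simp
    have final: "\<bar>k t - 1\<bar> \<le> A / c * exp (- \<epsilon> * t)" if t: "t \<ge> 0" for t
    proof -
      have kt: "0 < k t" "k t < 2" using bounds t by auto
      have "c * \<bar>k t - 1\<bar> \<le> \<bar>z t\<bar>" unfolding c_def z_def using pow_lip[OF kt al] .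
      also have "\<dots> \<le> A * exp (- \<epsilon> * t)" by (rule zabs[OF t])
      finally have "c * \<bar>k t - 1\<bar> \<le> A * exp (- \<epsilon> * t)" .
      thus "\<bar>k t - 1\<bar> \<le> A / c * exp (- \<epsilon> * t)" using cp by (simp add: field_simps)
    qed
    have "A / c > 0" using Ap cp by simp
    thus "\<exists>C>0. \<exists>\<epsilon>>0. \<forall>t\<ge>0. \<bar>k t - 1\<bar> \<le> C * exp (- \<epsilon> * t)"
      using final ep(1) by blast
  qed
qed

end
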